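(* Let $M \ge 2$, $k_1,\dots,k_M$ positive integers, $\nu_1,\dots,\nu_M \in \mathbb{R}$, $x_{10},\dots,x_{M0} \in \mathbb{R}$, and $$0 < q_1 < p_1 < q_2 < p_2 < \cdots < q_M < p_M.$$ Let $\mathcal{M} = \{1,\dots,M\}$ and define $$P(z,\lambda) = \sum_{S \subseteq \mathcal{M}} C_S\lambda^{\nu_{S'}}z^{k_S},\qquad C_S = \Big(\prod_{(i,j)\in S\times S'} a_{ij}\Big)\Big(\prod_{j\in S'} b_j\Big),$$ where $S' = \mathcal{M}\setminus S$, $k_S = \sum_{i\in S}k_i$, $\nu_{S'} = \sum_{j\in S'}\nu_j$, and $$a_{ij} = \sqrt{\frac{(p_j-q_i)(q_j-p_i)}{(q_j-q_i)(p_j-p_i)}},\qquad b_j = \sqrt{\frac{q_j}{p_j}}\,e^{-ik_jx_{j0}}.$$ Then, provided $|\lambda| = 1$, all zeros of the polynomial $z \mapsto P(z,\lambda)$ lie in the open unit disk $\{z \in \mathbb{C} : |z| < 1\}$.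
   Context: For $|\lambda|=1$ and real exponents, powers of $\lambda$ are taken with a fixed argument: write $\lambda = e^{i\varphi}$ and set $\lambda^{\nu} = e^{i\nu\varphi}$, so that $\lambda^{\nu_{S'}} = \prod_{j\in S'}\lambda^{\nu_j}$. *)

theory Defs
  imports "HOL-Analysis.Analysis"
begin

definition a_coef :: "(nat \<Rightarrow> real) \<Rightarrow> (nat \<Rightarrow> real) \<Rightarrow> nat \<Rightarrow> nat \<Rightarrow> real" where
  "a_coef p q i j = sqrt (((p j - q i) * (q j - p i)) / ((q j - q i) * (p j - p i)))"

definition b_coef :: "(nat \<Rightarrow> real) \<Rightarrow> (nat \<Rightarrow> real) \<Rightarrow> (nat \<Rightarrow> nat) \<Rightarrow> (nat \<Rightarrow> real) \<Rightarrow> nat \<Rightarrow> complex" where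
  "b_coef p q k x0 j = complex_of_real (sqrt (q j / p j)) * exp (- \<i> * complex_of_real (real (k j) * x0 j))"

definition C_coef :: "nat \<Rightarrow> (nat \<Rightarrow> real) \<Rightarrow> (nat \<Rightarrow> real) \<Rightarrow> (nat \<Rightarrow> nat) \<Rightarrow> (nat \<Rightarrow> real) \<Rightarrow> nat set \<Rightarrow> complex" where
  "C_coef M p q k x0 S =
     (\<Prod>i\<in>S. \<Prod>j\<in>{1..M} - S. complex_of_real (a_coef p q i j)) *
     (\<Prod>j\<in>{1..M} - S. b_coef p q k x0 j)"

text \<open>lambda = exp(i phi), and lambda^nu := exp(i nu phi) (fixed argument phi).\<close>
definition lam_pow :: "real \<Rightarrow> real \<Rightarrow> complex" where
  "lam_pow \<phi> \<nu> = exp (\<i> * complex_of_real (\<nu> * \<phi>))"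

definition P_poly :: "nat \<Rightarrow> (nat \<Rightarrow> nat) \<Rightarrow> (nat \<Rightarrow> real) \<Rightarrow> (nat \<Rightarrow> real) \<Rightarrow> (nat \<Rightarrow> real)
    \<Rightarrow> (nat \<Rightarrow> real) \<Rightarrow> real \<Rightarrow> complex \<Rightarrow> complex" where
  "P_poly M k \<nu> p q x0 \<phi> z =
     (\<Sum>S\<in>Pow {1..M}. C_coef M p q k x0 S * lam_pow \<phi> (\<Sum>j\<in>{1..M} - S. \<nu> j) * z ^ (\<Sum>i\<in>S. k i))"

end

theory Submission
  imports Defs
begin

lemma one_var:
  fixes G0 G1 :: complex
  assumes "G1 \<noteq> 0" "\<forall>y. 1 < norm y \<longrightarrow> G0 + G1 * y \<noteq> 0"
  shows "norm G0 \<le> norm G1"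
proof (rule ccontr)
  assume "\<not> ?thesis"
  hence "norm G1 < norm G0" by simp
  define y where "y = - G0 / G1"
  have "norm y = norm G0 / norm G1" by (simp add: y_def norm_divide)
  hence "1 < norm y" using \<open>norm G1 < norm G0\<close> assms(1) by simp
  moreover have "G0 + G1 * y = 0" using assms(1) by (simp add: y_def)
  ultimately show False using assms(2) by blast
qed

lemma quad:
  fixes c0 c1 c2 :: complex
  assumes "c2 \<noteq> 0" "\<forall>z. 1 < norm z \<longrightarrow> c2 * z^2 + c1 * z + c0 \<noteq> 0"
  shows "norm c0 \<le> norm c2"
proof -
  define s where "s = csqrt (c1^2 - 4*c2*c0)"
  have s2: "s^2 = c1^2 - 4*c2*c0" by (simp add: s_def)
  define r1 where "r1 = (-c1 + s)/(2*c2)"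
  define r2 where "r2 = (-c1 - s)/(2*c2)"
  have gen: "c2 * ((-c1 + t)/(2*c2))^2 + c1 * ((-c1 + t)/(2*c2)) + c0 = 0" if "t^2 = c1^2 - 4*c2*c0" for t
  proof -
    have "c2 * ((-c1 + t)/(2*c2))^2 + c1 * ((-c1 + t)/(2*c2)) + c0 = (t^2 - c1^2 + 4*c2*c0)/(4*c2)"
      using assms(1) by (simp add: field_simps power2_eq_square)
    also have "\<dots> = 0" using that by simp
    finally show ?thesis .
  qed
  have e1: "c2 * r1^2 + c1 * r1 + c0 = 0" unfolding r1_def by (rule gen[OF s2])
  have e2: "c2 * r2^2 + c1 * r2 + c0 = 0"
  proof -
    have "r2 = (-c1 + (-s))/(2*c2)" by (simp add: r2_def)
    moreover have "(-s)^2 = c1^2 - 4*c2*c0" using s2 by simp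
    ultimately show ?thesis using gen[of "-s"] by (simp only:)
  qed
  have p: "c0 = c2 * r1 * r2"
  proof -
    have m: "(-c1 + s) * (-c1 - s) = c1^2 - s^2" by (simp add: algebra_simps power2_eq_square)
    have "c2 * r1 * r2 = c2 * ((-c1 + s) * (-c1 - s)) / (4 * c2 * c2)"
      unfolding r1_def r2_def by simp
    also have "\<dots> = (c1^2 - s^2) / (4*c2)" unfolding m using assms(1) by simp
    also have "\<dots> = c0" using s2 assms(1) by simp
    finally show ?thesis by simp
  qed
  have n1: "norm r1 \<le> 1" using e1 assms(2) not_less by blast
  have n2: "norm r2 \<le> 1" using e2 assms(2) not_less by blast
  have "norm c0 = norm c2 * norm r1 * norm r2" using p by (simp add: norm_mult)
  also have "\<dots> \<le> norm c2 * 1 * 1"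
    using n1 n2 by (intro mult_mono) auto
  finally show ?thesis by linarith
qed

lemma pair_ineq:
  fixes a :: real and z :: complex
  assumes "\<bar>a\<bar> \<le> 1" "1 < norm z"
  shows "norm (1 + of_real a * z) \<le> norm (of_real a + z)" "of_real a + z \<noteq> 0"
proof -
  have h1: "(norm (of_real a + z))^2 = (a + Re z)^2 + (Im z)^2" by (simp add: cmod_power2)
  have h2: "(norm (1 + of_real a * z))^2 = (1 + a * Re z)^2 + (a * Im z)^2" by (simp add: cmod_power2)
  have h3: "(norm z)^2 = (Re z)^2 + (Im z)^2" by (simp add: cmod_power2)
  have id: "(a + Re z)^2 + (Im z)^2 - ((1 + a * Re z)^2 + (a * Im z)^2) = (1 - a^2) * (((Re z)^2 + (Im z)^2) - 1)"
    by (simp add: power2_eq_square algebra_simps)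
  have a2: "a^2 \<le> 1" using assms(1) abs_le_square_iff[of a 1] by simp
  have z2: "1 \<le> (norm z)^2" using assms(2) by (simp add: one_le_power)
  have z2': "1 \<le> (Re z)^2 + (Im z)^2" using z2 h3 by simp
  have nn: "0 \<le> (1 - a^2) * (((Re z)^2 + (Im z)^2) - 1)" using a2 z2' by (intro mult_nonneg_nonneg) auto
  have "(norm (1 + of_real a * z))^2 \<le> (norm (of_real a + z))^2"
    using id nn h1 h2 h3 by linarith
  thus "norm (1 + of_real a * z) \<le> norm (of_real a + z)"
    by (rule power2_le_imp_le) simp
  show "of_real a + z \<noteq> 0"
  proof
    assume "of_real a + z = 0"
    hence "z = - of_real a" using \<open>of_real a + z = 0\<close> by (simp add: eq_neg_iff_add_eq_0 add.commute)
    hence "norm z = \<bar>a\<bar>" by (simp only: norm_minus_cancel norm_of_real)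
    thus False using assms by simp
  qed
qed

lemma sum_ne0:
  fixes X Y :: complex
  assumes "norm X < norm Y"
  shows "X + Y \<noteq> 0"
proof
  assume "X + Y = 0"
  hence "Y = - X" by (simp add: eq_neg_iff_add_eq_0 add.commute)
  hence "norm Y = norm X" by simp
  thus False using assms by simp
qed

lemma two_var:
  fixes A B C D x y :: complex and a :: real
  assumes D0: "D \<noteq> 0"
    and hB: "\<forall>y. 1 < norm y \<longrightarrow> B + D * y \<noteq> 0"
    and hC: "\<forall>x. 1 < norm x \<longrightarrow> C + D * x \<noteq> 0"
    and hG: "\<forall>x y. 1 < norm x \<longrightarrow> 1 < norm y \<longrightarrow> A + B * x + C * y + D * x * y \<noteq> 0"
    and ha: "\<bar>a\<bar> \<le> 1" and hx: "1 < norm x" and hy: "1 < norm y"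
  shows "A + of_real a * B * x + of_real a * C * y + D * x * y \<noteq> 0"
proof -
  have nC: "norm C \<le> norm D" using one_var[of D C] D0 hC by (simp add: mult.commute)
  have hAC: "norm (A + C * t) \<le> norm (B + D * t)" if t: "1 < norm t" for t :: complex
  proof (rule one_var)
    show "B + D * t \<noteq> 0" using hB t by blast
    show "\<forall>ya. 1 < cmod ya \<longrightarrow> A + C * t + (B + D * t) * ya \<noteq> 0"
    proof (intro allI impI)
      fix u :: complex assume "1 < norm u"
      hence "A + B * u + C * t + D * u * t \<noteq> 0" using hG t by blast
      thus "A + C * t + (B + D * t) * u \<noteq> 0" by (simp add: algebra_simps)
    qed
  qed
  define c2 where "c2 = of_real a * C + D * x"
  define c1 where "c1 = of_real a * A + C + B * x + of_real a * D * x"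
  define c0 where "c0 = A + of_real a * B * x"
  have c2nz: "c2 \<noteq> 0"
  proof -
    have "norm (of_real a * C) \<le> norm C" using ha by (simp add: norm_mult mult_left_le_one_le)
    also have "\<dots> \<le> norm D" by (rule nC)
    also have "\<dots> < norm (D * x)" using hx D0 by (simp add: norm_mult)
    finally have "norm (of_real a * C) < norm (D * x)" .
    thus ?thesis unfolding c2_def by (rule sum_ne0)
  qed
  have "norm c0 \<le> norm c2"
  proof (rule quad[of c2 c1 c0])
    show "c2 \<noteq> 0" by (rule c2nz)
    show "\<forall>z. 1 < norm z \<longrightarrow> c2 * z^2 + c1 * z + c0 \<noteq> 0"
    proof (intro allI impI)
      fix t :: complex assume t: "1 < norm t"
      have eq: "c2 * t^2 + c1 * t + c0 = (A + C*t) * (1 + of_real a * t) + (B + D*t) * (of_real a + t) * x"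
        unfolding c2_def c1_def c0_def by (simp add: algebra_simps power2_eq_square)
      have p1: "norm (1 + of_real a * t) \<le> norm (of_real a + t)" "of_real a + t \<noteq> 0"
        using pair_ineq[OF ha t] by auto
      have b1: "B + D * t \<noteq> 0" using hB t by blast
      have "norm ((A + C*t) * (1 + of_real a * t)) \<le> norm (B + D*t) * norm (of_real a + t)"
        unfolding norm_mult using hAC[OF t] p1(1) by (intro mult_mono) auto
      also have "\<dots> < norm (B + D*t) * norm (of_real a + t) * norm x"
        using hx b1 p1(2) by simp
      also have "\<dots> = norm ((B + D*t) * (of_real a + t) * x)" by (simp add: norm_mult)
      finally show "c2 * t^2 + c1 * t + c0 \<noteq> 0" unfolding eq by (rule sum_ne0)
    qed
  qed
  have "norm c2 < norm c2 * norm y" using c2nz hy by simp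
  hence "norm c0 < norm (c2 * y)" using \<open>norm c0 \<le> norm c2\<close> by (simp add: norm_mult)
  hence "c0 + c2 * y \<noteq> 0" by (rule sum_ne0)
  thus ?thesis unfolding c0_def c2_def by (simp add: algebra_simps)
qed


definition dd :: "nat set \<Rightarrow> nat set \<Rightarrow> nat set \<Rightarrow> (nat set \<Rightarrow> complex) \<Rightarrow> (nat \<Rightarrow> complex) \<Rightarrow> complex" where
  "dd F T I c z = (\<Sum>S\<in>{S. S \<subseteq> I \<and> T \<subseteq> S \<and> S \<inter> F = {}}. c S * (\<Prod>i\<in>S - T. z i))"

definition SLY :: "nat set \<Rightarrow> (nat set \<Rightarrow> complex) \<Rightarrow> bool" where
  "SLY I c \<longleftrightarrow> (\<forall>T z. T \<subseteq> I \<longrightarrow> (\<forall>i\<in>I - T. 1 < norm (z i)) \<longrightarrow> dd {} T I c z \<noteq> 0)"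

definition edge :: "nat \<Rightarrow> nat \<Rightarrow> real \<Rightarrow> (nat set \<Rightarrow> complex) \<Rightarrow> nat set \<Rightarrow> complex" where
  "edge u v a c = (\<lambda>S. c S * (if (u \<in> S) \<noteq> (v \<in> S) then complex_of_real a else 1))"

lemma dd_split:
  assumes "finite I" "u \<in> I" "u \<notin> T" "u \<notin> F"
  shows "dd F T I c z = dd (insert u F) T I c z + z u * dd F (insert u T) I c z"
proof -
  let ?f = "\<lambda>S. c S * (\<Prod>i\<in>S - T. z i)"
  let ?X = "{S. S \<subseteq> I \<and> T \<subseteq> S \<and> S \<inter> F = {}}"
  let ?Y = "{S. S \<subseteq> I \<and> T \<subseteq> S \<and> S \<inter> insert u F = {}}"
  let ?Z = "{S. S \<subseteq> I \<and> insert u T \<subseteq> S \<and> S \<inter> F = {}}"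
  have fY: "finite ?Y" by (rule finite_subset[of _ "Pow I"]) (use assms(1) in auto)
  have fZ: "finite ?Z" by (rule finite_subset[of _ "Pow I"]) (use assms(1) in auto)
  have X: "?X = ?Y \<union> ?Z" by auto
  have d: "?Y \<inter> ?Z = {}" by auto
  have "dd F T I c z = sum ?f ?Y + sum ?f ?Z"
    unfolding dd_def X by (rule sum.union_disjoint[OF fY fZ d])
  moreover have "sum ?f ?Y = dd (insert u F) T I c z" unfolding dd_def ..
  moreover have "sum ?f ?Z = z u * dd F (insert u T) I c z"
    unfolding dd_def sum_distrib_left
  proof (rule sum.cong)
    fix S assume S: "S \<in> ?Z"
    hence fS: "finite (S - insert u T)" using assms(1) finite_subset by blast
    have e: "S - T = insert u (S - insert u T)" using S assms(3) by auto
    have "(\<Prod>i\<in>S - T. z i) = z u * (\<Prod>i\<in>S - insert u T. z i)"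
      unfolding e by (rule prod.insert[OF fS]) simp
    thus "?f S = z u * (c S * (\<Prod>i\<in>S - insert u T. z i))" by simp
  qed simp
  ultimately show ?thesis by simp
qed

lemma dd_indep:
  assumes "\<forall>i\<in>I - T - F. z i = z' i"
  shows "dd F T I c z = dd F T I c z'"
  unfolding dd_def
proof (rule sum.cong[OF refl])
  fix S assume "S \<in> {S. S \<subseteq> I \<and> T \<subseteq> S \<and> S \<inter> F = {}}"
  hence "\<forall>i\<in>S - T. z i = z' i" using assms by blast
  thus "c S * (\<Prod>i\<in>S - T. z i) = c S * (\<Prod>i\<in>S - T. z' i)" by simp
qed

lemma dd_upd:
  assumes "w \<in> T \<union> F"
  shows "dd F T I c (z(w := x)) = dd F T I c z"
  by (rule dd_indep) (use assms in auto)

lemma dd_edge_const: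
  assumes "u \<in> T \<union> F" "v \<in> T \<union> F"
  shows "dd F T I (edge u v a c) z = (if (u \<in> T) \<noteq> (v \<in> T) then complex_of_real a else 1) * dd F T I c z"
  unfolding dd_def edge_def sum_distrib_left
proof (rule sum.cong[OF refl])
  fix S assume S: "S \<in> {S. S \<subseteq> I \<and> T \<subseteq> S \<and> S \<inter> F = {}}"
  have "u \<in> S \<longleftrightarrow> u \<in> T" "v \<in> S \<longleftrightarrow> v \<in> T" using S assms by auto
  thus "c S * (if (u \<in> S) \<noteq> (v \<in> S) then complex_of_real a else 1) * (\<Prod>i\<in>S - T. z i) =
        (if (u \<in> T) \<noteq> (v \<in> T) then complex_of_real a else 1) * (c S * (\<Prod>i\<in>S - T. z i))"
    by simp
qed

lemma SLY_one:
  assumes "finite I"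
  shows "SLY I (\<lambda>_. 1)"
  unfolding SLY_def
proof (intro allI impI)
  fix T and z :: "nat \<Rightarrow> complex" assume T: "T \<subseteq> I" and z: "\<forall>i\<in>I - T. 1 < norm (z i)"
  have "dd {} T I (\<lambda>_. 1) z = (\<Sum>X\<in>Pow (I - T). (\<Prod>i\<in>X. z i))"
    unfolding dd_def
    by (rule sum.reindex_bij_witness[of _ "\<lambda>X. X \<union> T" "\<lambda>S. S - T"]) (use T in auto)
  also have "\<dots> = (\<Sum>X\<in>Pow (I - T). (\<Prod>i\<in>X. z i) * (\<Prod>i\<in>I - T - X. 1))" by simp
  also have "\<dots> = (\<Prod>i\<in>I - T. z i + 1)"
    by (rule prod_add[symmetric]) (use assms in auto)
  also have "\<dots> \<noteq> 0"
  proof -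
    have "z i + 1 \<noteq> 0" if "i \<in> I - T" for i
    proof
      assume "z i + 1 = 0"
      hence "z i = -1" by (simp add: eq_neg_iff_add_eq_0)
      hence "norm (z i) = 1" by simp
      moreover have "1 < norm (z i)" using z that by blast
      ultimately show False by simp
    qed
    thus ?thesis using assms by (simp add: prod_zero_iff)
  qed
  finally show "dd {} T I (\<lambda>_. 1) z \<noteq> 0" .
qed


lemma dd_expand2:
  assumes "finite I" "u \<in> I" "v \<in> I" "u \<noteq> v" "u \<notin> T" "v \<notin> T" "u \<notin> F" "v \<notin> F"
  shows "dd F T I c z = dd (insert v (insert u F)) T I c z + z v * dd (insert u F) (insert v T) I c z
     + z u * (dd (insert v F) (insert u T) I c z + z v * dd F (insert v (insert u T)) I c z)"
proof -
  have "dd F T I c z = dd (insert u F) T I c z + z u * dd F (insert u T) I c z"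
    using dd_split assms by blast
  moreover have "dd (insert u F) T I c z = dd (insert v (insert u F)) T I c z + z v * dd (insert u F) (insert v T) I c z"
    by (rule dd_split) (use assms in auto)
  moreover have "dd F (insert u T) I c z = dd (insert v F) (insert u T) I c z + z v * dd F (insert v (insert u T)) I c z"
    by (rule dd_split) (use assms in auto)
  ultimately show ?thesis by simp
qed

lemma edge_aux1:
  assumes sly: "SLY I c" and fin: "finite I" and T: "T \<subseteq> I" and u: "u \<in> T" and v: "v \<in> I" "v \<notin> T"
    and ha: "\<bar>a\<bar> \<le> 1" and z: "\<forall>i\<in>I - T. 1 < norm (z i)"
  shows "dd {} T I (edge u v a c) z \<noteq> 0"
proof -
  have sp: "dd {} T I (edge u v a c) z = dd {v} T I (edge u v a c) z + z v * dd {} (insert v T) I (edge u v a c) z"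
    using dd_split[OF fin v(1) v(2), of "{}"] by simp
  have e1: "dd {v} T I (edge u v a c) z = of_real a * dd {v} T I c z"
    using dd_edge_const[of u T "{v}" v] u v by simp
  have e2: "dd {} (insert v T) I (edge u v a c) z = dd {} (insert v T) I c z"
    using dd_edge_const[of u "insert v T" "{}" v] u v by simp
  define G0 where "G0 = dd {v} T I c z"
  define G1 where "G1 = dd {} (insert v T) I c z"
  have G1: "G1 \<noteq> 0" unfolding G1_def using sly T v z unfolding SLY_def by auto
  have "norm G0 \<le> norm G1"
  proof (rule one_var[OF G1], intro allI impI)
    fix y :: complex assume y: "1 < norm y"
    let ?z = "z(v := y)"
    have "dd {} T I c ?z \<noteq> 0" using sly T z y unfolding SLY_def by auto
    moreover have "dd {} T I c ?z = dd {v} T I c ?z + ?z v * dd {} (insert v T) I c ?z"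
      using dd_split[OF fin v(1) v(2), of "{}"] by simp
    moreover have "dd {v} T I c ?z = G0" unfolding G0_def by (rule dd_upd) simp
    moreover have "dd {} (insert v T) I c ?z = G1" unfolding G1_def by (rule dd_upd) simp
    ultimately show "G0 + G1 * y \<noteq> 0" by (simp add: mult.commute)
  qed
  have "norm (of_real a * G0) \<le> norm G1"
  proof -
    have "\<bar>a\<bar> * norm G0 \<le> 1 * norm G0" using ha by (intro mult_right_mono) auto
    thus ?thesis using \<open>norm G0 \<le> norm G1\<close> by (simp add: norm_mult)
  qed
  also have "\<dots> < norm (z v * G1)" using G1 z v by (simp add: norm_mult)
  finally have "of_real a * G0 + z v * G1 \<noteq> 0" by (rule sum_ne0)
  thus ?thesis unfolding sp e1 e2 G0_def G1_def .
qed

lemma edge_sym: "edge u v a c = edge v u a c"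
  unfolding edge_def by (intro ext) auto

lemma SLY_edge:
  assumes sly: "SLY I c" and fin: "finite I" and u: "u \<in> I" and v: "v \<in> I" and uv: "u \<noteq> v"
    and ha: "\<bar>a\<bar> \<le> 1"
  shows "SLY I (edge u v a c)"
  unfolding SLY_def
proof (intro allI impI)
  fix T and z :: "nat \<Rightarrow> complex" assume T: "T \<subseteq> I" and z: "\<forall>i\<in>I - T. 1 < norm (z i)"
  show "dd {} T I (edge u v a c) z \<noteq> 0"
  proof (cases "u \<in> T")
    case uT: True
    show ?thesis
    proof (cases "v \<in> T")
      case True
      hence "dd {} T I (edge u v a c) z = dd {} T I c z"
        using dd_edge_const[of u T "{}" v] uT by simp
      thus ?thesis using sly T z unfolding SLY_def by auto
    next
      case False
      show ?thesis using edge_aux1[OF sly fin T uT v False ha z] .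
    qed
  next
    case uT: False
    show ?thesis
    proof (cases "v \<in> T")
      case True
      thus ?thesis using edge_aux1[OF sly fin T True u uT ha z] edge_sym by metis
    next
      case vT: False
      define A where "A = dd (insert v (insert u {})) T I c z"
      define B where "B = dd (insert v {}) (insert u T) I c z"
      define C where "C = dd (insert u {}) (insert v T) I c z"
      define D where "D = dd {} (insert v (insert u T)) I c z"
      have ex: "dd {} T I c' z' = dd (insert v (insert u {})) T I c' z' + z' v * dd (insert u {}) (insert v T) I c' z'
         + z' u * (dd (insert v {}) (insert u T) I c' z' + z' v * dd {} (insert v (insert u T)) I c' z')" for c' z'
        by (rule dd_expand2) (use fin u v uv uT vT in auto)
      have "dd {} T I (edge u v a c) z = A + of_real a * B * z u + of_real a * C * z v + D * z u * z v"
      proof -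
        have "dd (insert v (insert u {})) T I (edge u v a c) z = A"
          unfolding A_def using dd_edge_const[of u T "insert v (insert u {})" v] uT vT by simp
        moreover have "dd (insert u {}) (insert v T) I (edge u v a c) z = of_real a * C"
          unfolding C_def using dd_edge_const[of u "insert v T" "insert u {}" v] uT vT uv by simp
        moreover have "dd (insert v {}) (insert u T) I (edge u v a c) z = of_real a * B"
          unfolding B_def using dd_edge_const[of u "insert u T" "insert v {}" v] uT vT uv by simp
        moreover have "dd {} (insert v (insert u T)) I (edge u v a c) z = D"
          unfolding D_def using dd_edge_const[of u "insert v (insert u T)" "{}" v] uT vT uv by simp
        ultimately show ?thesis using ex[of "edge u v a c" z] by (simp add: algebra_simps)
      qed
      moreover have "A + of_real a * B * z u + of_real a * C * z v + D * z u * z v \<noteq> 0"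
      proof (rule two_var)
        show "\<bar>a\<bar> \<le> 1" by (rule ha)
        show "1 < norm (z u)" "1 < norm (z v)" using z u v uT vT by auto
        have Tuv: "insert v (insert u T) \<subseteq> I" using T u v by auto
        show "D \<noteq> 0" unfolding D_def using sly Tuv z unfolding SLY_def by auto
        show "\<forall>y. 1 < norm y \<longrightarrow> B + D * y \<noteq> 0"
        proof (intro allI impI)
          fix y :: complex assume y: "1 < norm y"
          let ?z = "z(v := y)"
          have "dd {} (insert u T) I c ?z \<noteq> 0" using sly T u z y unfolding SLY_def by auto
          moreover have "dd {} (insert u T) I c ?z = dd {v} (insert u T) I c ?z + ?z v * dd {} (insert v (insert u T)) I c ?z"
            using dd_split[OF fin v, of "insert u T" "{}"] uv vT by simp
          moreover have "dd {v} (insert u T) I c ?z = B" unfolding B_def by (rule dd_upd) simp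
          moreover have "dd {} (insert v (insert u T)) I c ?z = D" unfolding D_def by (rule dd_upd) simp
          ultimately show "B + D * y \<noteq> 0" by (simp add: mult.commute)
        qed
        show "\<forall>x. 1 < norm x \<longrightarrow> C + D * x \<noteq> 0"
        proof (intro allI impI)
          fix y :: complex assume y: "1 < norm y"
          let ?z = "z(u := y)"
          have "dd {} (insert v T) I c ?z \<noteq> 0" using sly T v z y unfolding SLY_def by auto
          moreover have "dd {} (insert v T) I c ?z = dd {u} (insert v T) I c ?z + ?z u * dd {} (insert u (insert v T)) I c ?z"
            using dd_split[OF fin u, of "insert v T" "{}"] uv uT by simp
          moreover have "dd {u} (insert v T) I c ?z = C" unfolding C_def by (rule dd_upd) simp
          moreover have "insert u (insert v T) = insert v (insert u T)" by auto
          moreover have "dd {} (insert v (insert u T)) I c ?z = D" unfolding D_def by (rule dd_upd) simp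
          ultimately show "C + D * y \<noteq> 0" by (simp add: mult.commute)
        qed
        show "\<forall>x y. 1 < norm x \<longrightarrow> 1 < norm y \<longrightarrow> A + B * x + C * y + D * x * y \<noteq> 0"
        proof (intro allI impI)
          fix x y :: complex assume x: "1 < norm x" and y: "1 < norm y"
          let ?z = "z(u := x, v := y)"
          have "dd {} T I c ?z \<noteq> 0" using sly T z x y unfolding SLY_def by auto
          moreover note ex[of c ?z]
          moreover have "dd (insert v (insert u {})) T I c ?z = A"
            unfolding A_def by (rule dd_indep) auto
          moreover have "dd (insert u {}) (insert v T) I c ?z = C"
            unfolding C_def by (rule dd_indep) auto
          moreover have "dd (insert v {}) (insert u T) I c ?z = B"
            unfolding B_def by (rule dd_indep) auto
          moreover have "dd {} (insert v (insert u T)) I c ?z = D"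
            unfolding D_def by (rule dd_indep) auto
          ultimately show "A + B * x + C * y + D * x * y \<noteq> 0" using uv by (simp add: algebra_simps)
        qed
      qed
      ultimately show ?thesis by simp
    qed
  qed
qed


definition cE :: "(nat \<Rightarrow> nat \<Rightarrow> real) \<Rightarrow> (nat \<times> nat) set \<Rightarrow> nat set \<Rightarrow> complex" where
  "cE w E S = (\<Prod>e\<in>E. if (fst e \<in> S) \<noteq> (snd e \<in> S) then complex_of_real (w (fst e) (snd e)) else 1)"

lemma SLY_cE:
  assumes "finite I" "finite E" "E \<subseteq> {(i,j). i \<in> I \<and> j \<in> I \<and> i \<noteq> j}"
    "\<forall>i j. \<bar>w i j\<bar> \<le> 1"
  shows "SLY I (cE w E)"
  using assms(2,3)
proof (induction E rule: finite_induct)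
  case empty
  have "cE w {} = (\<lambda>_. 1)" unfolding cE_def by (intro ext) simp
  thus ?case using SLY_one[OF assms(1)] by simp
next
  case (insert e E)
  obtain u v where e: "e = (u, v)" by force
  have uv: "u \<in> I" "v \<in> I" "u \<noteq> v" using insert.prems e by auto
  have "cE w (insert e E) = edge u v (w u v) (cE w E)"
    unfolding cE_def edge_def using insert.hyps e by (intro ext) (simp add: mult.commute)
  moreover have "SLY I (cE w E)" using insert by auto
  ultimately show ?case using SLY_edge[OF _ assms(1) uv] assms(4) by simp
qed


lemma chain:
  fixes i j M :: nat and p q :: "nat \<Rightarrow> real"
  assumes qp: "\<forall>i\<in>{1..M}. q i < p i" and pq: "\<forall>i. 1 \<le> i \<and> i < M \<longrightarrow> p i < q (i + 1)"
  shows "1 \<le> i \<Longrightarrow> j \<le> M \<Longrightarrow> i < j \<Longrightarrow> p i < (q j :: real)"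
proof (induction j)
  case 0 thus ?case by simp
next
  case (Suc j)
  show ?case
  proof (cases "i = j")
    case True thus ?thesis using pq Suc.prems by auto
  next
    case False
    hence ij: "i < j" using Suc.prems by simp
    have "p i < q j" using Suc.IH Suc.prems ij by simp
    also have "q j < p j" using qp Suc.prems ij by auto
    also have "p j < q (Suc j)" using pq Suc.prems ij by auto
    finally show ?thesis .
  qed
qed

lemma a_sym: "a_coef p q i j = a_coef p q j i"
proof -
  have n: "(p j - q i) * (q j - p i) = (p i - q j) * (q i - p j)" by (simp add: algebra_simps)
  have d: "(q j - q i) * (p j - p i) = (q i - q j) * (p i - p j)" by (simp add: algebra_simps)
  show ?thesis unfolding a_coef_def n d ..
qed

lemma a_bound:
  fixes p q :: "nat \<Rightarrow> real"
  assumes "q i < p i" "p i < q j" "q j < p j"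
  shows "0 \<le> a_coef p q i j \<and> a_coef p q i j \<le> 1"
proof -
  define N where "N = (p j - q i) * (q j - p i)"
  define D where "D = (q j - q i) * (p j - p i)"
  have N0: "0 < N" unfolding N_def using assms by (intro mult_pos_pos) auto
  have D0: "0 < D" unfolding D_def using assms by (intro mult_pos_pos) auto
  have "D - N = (p j - q j) * (p i - q i)" unfolding D_def N_def by (simp add: algebra_simps)
  moreover have "0 < (p j - q j) * (p i - q i)" using assms by (intro mult_pos_pos) auto
  ultimately have "N \<le> D" by simp
  hence "N / D \<le> 1" using D0 by simp
  moreover have "0 \<le> N / D" using N0 D0 by simp
  ultimately show ?thesis unfolding a_coef_def N_def[symmetric] D_def[symmetric] by simp
qed


lemma cE_prod:
  fixes w :: "nat \<Rightarrow> nat \<Rightarrow> real" and a :: "nat \<Rightarrow> nat \<Rightarrow> real"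
  assumes fin: "finite I" and S: "S \<subseteq> I"
    and wa: "\<And>i j. i \<in> I \<Longrightarrow> j \<in> I \<Longrightarrow> i \<noteq> j \<Longrightarrow> w i j * w j i = a i j"
  shows "cE w {(i,j). i \<in> I \<and> j \<in> I \<and> i \<noteq> j} S = (\<Prod>i\<in>S. \<Prod>j\<in>I - S. complex_of_real (a i j))"
proof -
  let ?E = "{(i,j). i \<in> I \<and> j \<in> I \<and> i \<noteq> j}"
  let ?f = "\<lambda>e. if (fst e \<in> S) \<noteq> (snd e \<in> S) then complex_of_real (w (fst e) (snd e)) else 1"
  let ?P = "S \<times> (I - S)" and ?Q = "(I - S) \<times> S"
  have fE: "finite ?E" by (rule finite_subset[of _ "I \<times> I"]) (use fin in auto)
  have fP: "finite ?P" "finite ?Q" using fin S finite_subset by auto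
  have "cE w ?E S = prod ?f (?P \<union> ?Q)"
    unfolding cE_def
    by (rule prod.mono_neutral_right[OF fE]) (use S in auto)
  also have "\<dots> = prod ?f ?P * prod ?f ?Q"
    by (rule prod.union_disjoint) (use fP in auto)
  also have "prod ?f ?Q = prod (\<lambda>e. ?f (snd e, fst e)) ?P"
    by (rule prod.reindex_bij_witness[of _ "\<lambda>e. (snd e, fst e)" "\<lambda>e. (snd e, fst e)"]) auto
  also have "prod ?f ?P * prod (\<lambda>e. ?f (snd e, fst e)) ?P = prod (\<lambda>e. complex_of_real (a (fst e) (snd e))) ?P"
    unfolding prod.distrib[symmetric]
  proof (rule prod.cong[OF refl])
    fix e assume e: "e \<in> ?P"
    hence "fst e \<in> I" "snd e \<in> I" "fst e \<noteq> snd e" "fst e \<in> S" "snd e \<notin> S" using S by auto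
    thus "?f e * ?f (snd e, fst e) = complex_of_real (a (fst e) (snd e))"
      using wa[of "fst e" "snd e"] by (simp flip: of_real_mult)
  qed
  also have "\<dots> = (\<Prod>i\<in>S. \<Prod>j\<in>I - S. complex_of_real (a i j))"
    by (simp add: prod.cartesian_product case_prod_beta)
  finally show ?thesis .
qed


lemma P_factor:
  fixes M :: nat and k :: "nat \<Rightarrow> nat" and \<nu> p q x0 :: "nat \<Rightarrow> real" and \<phi> :: real and z :: complex
    and w :: "nat \<Rightarrow> nat \<Rightarrow> real"
  assumes wa: "\<And>i j. i \<in> {1..M} \<Longrightarrow> j \<in> {1..M} \<Longrightarrow> i \<noteq> j \<Longrightarrow> w i j * w j i = a_coef p q i j"
    and Bnz: "\<And>j. j \<in> {1..M} \<Longrightarrow> b_coef p q k x0 j * lam_pow \<phi> (\<nu> j) \<noteq> 0"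
  shows "P_poly M k \<nu> p q x0 \<phi> z =
    (\<Prod>j\<in>{1..M}. b_coef p q k x0 j * lam_pow \<phi> (\<nu> j)) *
    dd {} {} {1..M} (cE w {(i,j). i \<in> {1..M} \<and> j \<in> {1..M} \<and> i \<noteq> j})
       (\<lambda>i. z ^ k i / (b_coef p q k x0 i * lam_pow \<phi> (\<nu> i)))"
proof -
  let ?I = "{1..M::nat}"
  let ?B = "\<lambda>j. b_coef p q k x0 j * lam_pow \<phi> (\<nu> j)"
  let ?Z = "\<lambda>i. z ^ k i / ?B i"
  let ?c = "cE w {(i,j). i \<in> ?I \<and> j \<in> ?I \<and> i \<noteq> j}"
  have set: "{S. S \<subseteq> ?I \<and> {} \<subseteq> S \<and> S \<inter> {} = {}} = Pow ?I" by auto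
  have "(\<Prod>j\<in>?I. ?B j) * dd {} {} ?I ?c ?Z = (\<Sum>S\<in>Pow ?I. (\<Prod>j\<in>?I. ?B j) * (?c S * (\<Prod>i\<in>S. ?Z i)))"
    unfolding dd_def set by (simp add: sum_distrib_left)
  also have "\<dots> = (\<Sum>S\<in>Pow ?I. C_coef M p q k x0 S * lam_pow \<phi> (\<Sum>j\<in>?I - S. \<nu> j) * z ^ (\<Sum>i\<in>S. k i))"
  proof (rule sum.cong[OF refl])
    fix S assume "S \<in> Pow ?I"
    hence S: "S \<subseteq> ?I" by simp
    have fS: "finite S" using S finite_subset by blast
    have cS: "?c S = (\<Prod>i\<in>S. \<Prod>j\<in>?I - S. complex_of_real (a_coef p q i j))"
      by (rule cE_prod[OF _ S]) (use wa in auto)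
    have lam: "lam_pow \<phi> (\<Sum>j\<in>?I - S. \<nu> j) = (\<Prod>j\<in>?I - S. lam_pow \<phi> (\<nu> j))"
    proof -
      have "\<i> * complex_of_real ((\<Sum>j\<in>?I - S. \<nu> j) * \<phi>) = (\<Sum>j\<in>?I - S. \<i> * complex_of_real (\<nu> j * \<phi>))"
        by (simp add: sum_distrib_right sum_distrib_left)
      thus ?thesis unfolding lam_pow_def by (simp add: exp_sum)
    qed
    have zp: "z ^ (\<Sum>i\<in>S. k i) = (\<Prod>i\<in>S. z ^ k i)" by (rule power_sum)
    have BI: "(\<Prod>j\<in>?I. ?B j) = (\<Prod>j\<in>?I - S. ?B j) * (\<Prod>j\<in>S. ?B j)"
      by (rule prod.subset_diff[OF S]) simp
    have BZ: "(\<Prod>j\<in>S. ?B j) * (\<Prod>i\<in>S. ?Z i) = (\<Prod>i\<in>S. z ^ k i)"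
      unfolding prod.distrib[symmetric]
      by (rule prod.cong[OF refl]) (use Bnz S in auto)
    have "(\<Prod>j\<in>?I. ?B j) * (?c S * (\<Prod>i\<in>S. ?Z i)) = ?c S * (\<Prod>j\<in>?I - S. ?B j) * ((\<Prod>j\<in>S. ?B j) * (\<Prod>i\<in>S. ?Z i))"
      unfolding BI by (simp add: algebra_simps)
    also have "\<dots> = ?c S * (\<Prod>j\<in>?I - S. ?B j) * (\<Prod>i\<in>S. z ^ k i)"
      unfolding BZ ..
    also have "\<dots> = ?c S * (\<Prod>j\<in>?I - S. b_coef p q k x0 j) * (\<Prod>j\<in>?I - S. lam_pow \<phi> (\<nu> j)) * (\<Prod>i\<in>S. z ^ k i)"
      by (simp only: prod.distrib mult.assoc)
    also have "\<dots> = C_coef M p q k x0 S * lam_pow \<phi> (\<Sum>j\<in>?I - S. \<nu> j) * z ^ (\<Sum>i\<in>S. k i)"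
      unfolding C_coef_def cS lam zp ..
    finally show "(\<Prod>j\<in>?I. ?B j) * (?c S * (\<Prod>i\<in>S. ?Z i)) = C_coef M p q k x0 S * lam_pow \<phi> (\<Sum>j\<in>?I - S. \<nu> j) * z ^ (\<Sum>i\<in>S. k i)" .
  qed
  also have "\<dots> = P_poly M k \<nu> p q x0 \<phi> z" unfolding P_poly_def ..
  finally show ?thesis ..
qed


lemma norm_B:
  assumes "0 < q j" "q j < p j"
  shows "norm (b_coef p q k x0 j * lam_pow \<phi> (\<nu> j)) = sqrt (q j / p j)"
proof -
  have "- \<i> * complex_of_real (real (k j) * x0 j) = \<i> * complex_of_real (- (real (k j) * x0 j))" by simp
  hence "norm (exp (- \<i> * complex_of_real (real (k j) * x0 j))) = 1" by (simp only: norm_exp_i_times)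
  moreover have "norm (lam_pow \<phi> (\<nu> j)) = 1" unfolding lam_pow_def by (rule norm_exp_i_times)
  moreover have "0 \<le> q j / p j" using assms by simp
  ultimately show ?thesis unfolding b_coef_def by (simp add: norm_mult)
qed

theorem theorem3:
  fixes M :: nat and k :: "nat \<Rightarrow> nat" and \<nu> p q x0 :: "nat \<Rightarrow> real" and \<phi> :: real and z :: complex
  assumes "M \<ge> 2"
    and "\<forall>i\<in>{1..M}. k i > 0"
    and "0 < q 1"
    and "\<forall>i\<in>{1..M}. q i < p i"
    and "\<forall>i. 1 \<le> i \<and> i < M \<longrightarrow> p i < q (i + 1)"
    and "P_poly M k \<nu> p q x0 \<phi> z = 0"
  shows "norm z < 1"
proof (rule ccontr)
  assume "\<not> norm z < 1"
  hence z1: "1 \<le> norm z" by simp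
  let ?I = "{1..M::nat}"
  let ?B = "\<lambda>j. b_coef p q k x0 j * lam_pow \<phi> (\<nu> j)"
  define w where "w i j = (if i < j \<and> i \<in> ?I \<and> j \<in> ?I then a_coef p q i j else 1)" for i j
  have ch: "p i < q j" if "i \<in> ?I" "j \<in> ?I" "i < j" for i j
    using chain[OF assms(4) assms(5)] that by auto
  have qpos: "0 < q j" if "j \<in> ?I" for j
  proof (cases "j = 1")
    case True thus ?thesis using assms(3) by simp
  next
    case False
    hence "1 < j" using that by auto
    hence "p 1 < q j" using ch[of 1 j] that assms(1) by auto
    moreover have "q 1 < p 1" using assms(4) assms(1) by auto
    ultimately show ?thesis using assms(3) by linarith
  qed
  have ab: "0 \<le> a_coef p q i j \<and> a_coef p q i j \<le> 1" if "i \<in> ?I" "j \<in> ?I" "i < j" for i j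
    by (rule a_bound) (use assms(4) ch that in auto)
  have wb: "\<forall>i j. \<bar>w i j\<bar> \<le> 1" unfolding w_def using ab by auto
  have wa: "w i j * w j i = a_coef p q i j" if "i \<in> ?I" "j \<in> ?I" "i \<noteq> j" for i j
  proof (cases "i < j")
    case True thus ?thesis unfolding w_def using that by auto
  next
    case False
    hence "j < i" using that by auto
    thus ?thesis unfolding w_def using that a_sym[of p q i j] by auto
  qed
  have nB: "norm (?B j) = sqrt (q j / p j)" if "j \<in> ?I" for j
    using norm_B[of q j p k x0 \<phi> \<nu>] qpos[OF that] assms(4) that by auto
  have Bpos: "0 < norm (?B j)" and Blt: "norm (?B j) < 1" if "j \<in> ?I" for j
  proof -
    have qj: "0 < q j" using qpos[OF that] .
    have pj: "q j < p j" using assms(4) that by blast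
    have "0 < q j / p j" "q j / p j < 1" using qj pj by auto
    thus "0 < norm (?B j)" "norm (?B j) < 1" using nB[OF that] by auto
  qed
  have Bnz: "?B j \<noteq> 0" if "j \<in> ?I" for j using Bpos[OF that] by auto
  have sly: "SLY ?I (cE w {(i,j). i \<in> ?I \<and> j \<in> ?I \<and> i \<noteq> j})"
  proof (rule SLY_cE)
    show "finite {(i,j). i \<in> ?I \<and> j \<in> ?I \<and> i \<noteq> j}"
      by (rule finite_subset[of _ "?I \<times> ?I"]) auto
  qed (use wb in auto)
  have zc: "\<forall>i\<in>?I - {}. 1 < norm (z ^ k i / ?B i)"
  proof
    fix i assume i: "i \<in> ?I - {}"
    have "1 \<le> norm z ^ k i" using z1 by (simp add: one_le_power)
    have bp: "0 < norm (?B i)" using Bpos i by blast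
    have bl: "norm (?B i) < 1" using Blt i by blast
    have "1 / norm (?B i) \<le> norm z ^ k i / norm (?B i)"
      using \<open>1 \<le> norm z ^ k i\<close> bp by (intro divide_right_mono) auto
    moreover have "1 < 1 / norm (?B i)" using bp bl by simp
    moreover have "norm (z ^ k i / ?B i) = norm z ^ k i / norm (?B i)" by (simp add: norm_divide norm_power)
    ultimately show "1 < norm (z ^ k i / ?B i)" by linarith
  qed
  have dnz: "dd {} {} ?I (cE w {(i,j). i \<in> ?I \<and> j \<in> ?I \<and> i \<noteq> j}) (\<lambda>i. z ^ k i / ?B i) \<noteq> 0"
    using sly[unfolded SLY_def, rule_format, of "{}" "\<lambda>i. z ^ k i / ?B i", OF empty_subsetI] zc by blast
  have pnz: "(\<Prod>j\<in>?I. ?B j) \<noteq> 0" using Bnz by (simp add: prod_zero_iff)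
  have "P_poly M k \<nu> p q x0 \<phi> z = (\<Prod>j\<in>?I. ?B j) *
    dd {} {} ?I (cE w {(i,j). i \<in> ?I \<and> j \<in> ?I \<and> i \<noteq> j}) (\<lambda>i. z ^ k i / ?B i)"
    by (rule P_factor) (use wa Bnz in blast)+
  hence "P_poly M k \<nu> p q x0 \<phi> z \<noteq> 0" using pnz dnz by simp
  thus False using assms(6) by simp
qed

end
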